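(* Let $q\ge1$ and assume Hypothesis (H$_q$). Suppose moreover $|f'(u)|\le M$ for all $u\in[ma,b]$. Then for all $x\in[a,b]$ and $\theta>0$, $$\Big|\frac{(x-a)^\theta+(b-x)^\theta}{b-a}f(mx)-\frac{\Gamma(\theta+1)}{m^\theta(b-a)}\Big[J^\theta_{(mx)^-}f(ma)+J^\theta_{(mx)^+}f(mb)\Big]\Big|\le\frac{mM}{\theta+1}\Big(\frac{\alpha m+\theta+1}{\alpha+\theta+1}\Big)^{\frac1q}\frac{(x-a)^{\theta+1}+(b-x)^{\theta+1}}{b-a}.$$
   Context: Let $\Gamma$ denote Euler's Gamma function. For $\theta>0$ and $x\in[a,b]$: $J^\theta_{(mx)^-}f(ma)=\frac{1}{\Gamma(\theta)}\int_{ma}^{mx}(s-ma)^{\theta-1}f(s)\,ds$ and $J^\theta_{(mx)^+}f(mb)=\frac{1}{\Gamma(\theta)}\int_{mx}^{mb}(mb-s)^{\theta-1}f(s)\,ds$ (each equal to $0$ if its interval of integration is degenerate). $(\alpha,m)$-convexity: for $(\alpha,m)\in[0,1]\times(0,1]$ and an interval $K\subseteq[0,\infty)$, a function $g:K\to\mathbb{R}$ is $(\alpha,m)$-convex on $K$ if $g(tX+m(1-t)Y)\le t^\alpha g(X)+m(1-t^\alpha)g(Y)$ for all $X,Y\in K$ and $t\in[0,1]$ with $tX+m(1-t)Y\in K$ (convention $0^0=1$). Hypothesis (H$_q$): $I\subseteq[0,\infty)$ is an interval, $f:I\to\mathbb{R}$ is differentiable on the interior $I^\circ$, $m\in(0,1]$,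 $\alpha\in[0,1]$, $a<b$ with $ma,b\in I^\circ$, $f'$ is Lebesgue integrable on $[ma,mb]$, and $|f'|^q$ is $(\alpha,m)$-convex on $[ma,b]$. *)

theory Defs
  imports "HOL-Analysis.Analysis"
begin

text \<open>Real power with the convention 0^0 = 1 (Isabelle's powr has 0 powr 0 = 0).\<close>
definition rpow0 :: "real \<Rightarrow> real \<Rightarrow> real" where
  "rpow0 t s = (if t = 0 \<and> s = 0 then 1 else t powr s)"

definition alpha_m_convex :: "real \<Rightarrow> real \<Rightarrow> real set \<Rightarrow> (real \<Rightarrow> real) \<Rightarrow> bool" where
  "alpha_m_convex \<alpha> m K g \<longleftrightarrow>
     (\<forall>X\<in>K. \<forall>Y\<in>K. \<forall>t\<in>{0..1}. t * X + m * (1 - t) * Y \<in> K \<longrightarrow>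
        g (t * X + m * (1 - t) * Y) \<le> rpow0 t \<alpha> * g X + m * (1 - rpow0 t \<alpha>) * g Y)"

text \<open>Left-sided fractional integral J^theta_{(mx)^-} f(ma).\<close>
definition frac_left :: "real \<Rightarrow> (real \<Rightarrow> real) \<Rightarrow> real \<Rightarrow> real \<Rightarrow> real" where
  "frac_left \<theta> f lo hi = (1 / Gamma \<theta>) * integral {lo..hi} (\<lambda>s. (s - lo) powr (\<theta> - 1) * f s)"

text \<open>Right-sided fractional integral J^theta_{(mx)^+} f(mb).\<close>
definition frac_right :: "real \<Rightarrow> (real \<Rightarrow> real) \<Rightarrow> real \<Rightarrow> real \<Rightarrow> real" where
  "frac_right \<theta> f lo hi = (1 / Gamma \<theta>) * integral {lo..hi} (\<lambda>s. (hi - s) powr (\<theta> - 1) * f s)"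

end

theory Submission
  imports Defs
begin

lemma powr_int_left:
  fixes lo hi p :: real
  assumes "lo \<le> hi" "p > 0"
  shows "((\<lambda>s. (s - lo) powr p) has_integral (hi - lo) powr (p + 1) / (p + 1)) {lo..hi}"
proof -
  have "((\<lambda>s. (s - lo) powr p) has_integral
      ((\<lambda>s. (s - lo) powr (p + 1) / (p + 1)) hi - (\<lambda>s. (s - lo) powr (p + 1) / (p + 1)) lo)) {lo..hi}"
  proof (rule fundamental_theorem_of_calculus_interior[OF assms(1)])
    show "continuous_on {lo..hi} (\<lambda>s. (s - lo) powr (p + 1) / (p + 1))"
      using assms by (intro continuous_intros continuous_on_powr') auto
    fix s assume s: "s \<in> {lo<..<hi}"
    show "((\<lambda>s. (s - lo) powr (p + 1) / (p + 1)) has_vector_derivative (s - lo) powr p) (at s)"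
      unfolding has_real_derivative_iff_has_vector_derivative[symmetric]
      using s assms by (auto intro!: derivative_eq_intros simp: add_nonneg_eq_0_iff)
  qed
  then show ?thesis using assms by simp
qed

lemma powr_int_right:
  fixes lo hi p :: real
  assumes "lo \<le> hi" "p > 0"
  shows "((\<lambda>s. (hi - s) powr p) has_integral (hi - lo) powr (p + 1) / (p + 1)) {lo..hi}"
proof -
  have "((\<lambda>s. (hi - s) powr p) has_integral
      ((\<lambda>s. 0 - (hi - s) powr (p + 1) / (p + 1)) hi - (\<lambda>s. 0 - (hi - s) powr (p + 1) / (p + 1)) lo)) {lo..hi}"
  proof (rule fundamental_theorem_of_calculus_interior[OF assms(1)])
    show "continuous_on {lo..hi} (\<lambda>s. 0 - (hi - s) powr (p + 1) / (p + 1))"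
      using assms by (intro continuous_intros continuous_on_powr') auto
    fix s assume s: "s \<in> {lo<..<hi}"
    show "((\<lambda>s. 0 - (hi - s) powr (p + 1) / (p + 1)) has_vector_derivative (hi - s) powr p) (at s)"
      unfolding has_real_derivative_iff_has_vector_derivative[symmetric]
      using s assms by (auto intro!: derivative_eq_intros simp: add_nonneg_eq_0_iff)
  qed
  then show ?thesis using assms by simp
qed

lemma pw:
  fixes y M h c q :: real
  assumes "q \<ge> 1" "y \<ge> 0" "M \<ge> 0" "h > 0" "c > 0"
    and le: "y powr q \<le> M powr q * h"
  shows "y \<le> M * ((1 - 1/q) * c powr (1/q) + (1/q) * c powr (1/q - 1) * h)"
proof -
  have "y = (y powr q) powr (1/q)" using assms by (simp add: powr_powr)
  also have "\<dots> \<le> (M powr q * h) powr (1/q)"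
    using assms by (intro powr_mono2) auto
  also have "\<dots> = M * h powr (1/q)"
    using assms by (simp add: powr_mult powr_powr)
  also have "h powr (1/q) \<le> (1 - 1/q) * c powr (1/q) + (1/q) * c powr (1/q - 1) * h"
  proof -
    have y: "h powr (1/q) * c powr (1 - 1/q) \<le> (1/q) * h + (1 - 1/q) * c"
      using assms by (intro Youngs_inequality_0) auto
    have cc: "c powr (1 - 1/q) * c powr (1/q - 1) = 1"
      using assms by (simp add: powr_add[symmetric])
    have cc2: "c * c powr (1/q - 1) = c powr (1/q)"
      using assms powr_add[of c 1 "1/q - 1"] by simp
    have "h powr (1/q) = h powr (1/q) * c powr (1 - 1/q) * c powr (1/q - 1)"
      using cc by (simp add: mult.assoc)
    also have "\<dots> \<le> ((1/q) * h + (1 - 1/q) * c) * c powr (1/q - 1)"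
      using y by (intro mult_right_mono) auto
    also have "\<dots> = (1 - 1/q) * (c * c powr (1/q - 1)) + (1/q) * c powr (1/q - 1) * h"
      by (simp add: algebra_simps)
    finally show ?thesis using cc2 by simp
  qed
  then have "M * h powr (1/q) \<le> M * ((1 - 1/q) * c powr (1/q) + (1/q) * c powr (1/q - 1) * h)"
    using assms by (intro mult_left_mono) auto
  finally show ?thesis .
qed


lemma side_bound:
  fixes d g :: "real \<Rightarrow> real" and S :: "real set" and q m \<alpha> \<theta> L M :: real
  assumes q: "q \<ge> 1" and m: "0 < m" "m \<le> 1" and \<alpha>: "0 \<le> \<alpha>" "\<alpha> \<le> 1"
    and \<theta>: "\<theta> > 0" and L: "L > 0" and M: "M \<ge> 0"
    and int1: "((\<lambda>s. d s powr \<theta>) has_integral L powr (\<theta> + 1) / (\<theta> + 1)) S"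
    and int2: "((\<lambda>s. d s powr (\<theta> + \<alpha>)) has_integral L powr (\<theta> + \<alpha> + 1) / (\<theta> + \<alpha> + 1)) S"
    and drange: "\<And>s. s \<in> S \<Longrightarrow> 0 \<le> d s \<and> d s \<le> L"
    and pt: "\<And>s. s \<in> S \<Longrightarrow> \<bar>g s\<bar> powr q \<le> M powr q * (m + (1 - m) * rpow0 (d s / L) \<alpha>)"
    and gint: "(\<lambda>s. d s powr \<theta> * g s) integrable_on S"
  shows "\<bar>integral S (\<lambda>s. d s powr \<theta> * g s)\<bar>
         \<le> M * L powr (\<theta> + 1) / (\<theta> + 1) * ((\<alpha> * m + \<theta> + 1) / (\<alpha> + \<theta> + 1)) powr (1 / q)"
proof -
  define c where "c = (\<alpha> * m + \<theta> + 1) / (\<alpha> + \<theta> + 1)"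
  have am: "\<alpha> * m \<ge> 0" using m \<alpha> by simp
  have c: "c > 0" unfolding c_def using am \<alpha> \<theta> by (intro divide_pos_pos) auto
  define A where "A = (1 - 1/q) * c powr (1/q)"
  define B where "B = (1/q) * c powr (1/q - 1)"
  have A: "A \<ge> 0" unfolding A_def using q by auto
  have B: "B \<ge> 0" unfolding B_def using q by auto
  define G where "G s = M * ((A + B * m) * d s powr \<theta> + (B * (1 - m) / L powr \<alpha>) * d s powr (\<theta> + \<alpha>))" for s
  define V where "V = M * ((A + B * m) * (L powr (\<theta> + 1) / (\<theta> + 1))
       + (B * (1 - m) / L powr \<alpha>) * (L powr (\<theta> + \<alpha> + 1) / (\<theta> + \<alpha> + 1)))"
  have GI: "(G has_integral V) S"
    unfolding G_def V_def
    by (intro has_integral_mult_right has_integral_add int1 int2)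
  have le: "norm (d s powr \<theta> * g s) \<le> G s" if s: "s \<in> S" for s
  proof (cases "d s = 0")
    case True
    then show ?thesis using \<theta> \<alpha> by (simp add: G_def)
  next
    case False
    then have ds: "d s > 0" using drange[OF s] by auto
    define t where "t = d s / L"
    have t: "t > 0" unfolding t_def using ds L by auto
    have rt: "rpow0 t \<alpha> = t powr \<alpha>" unfolding rpow0_def using t by auto
    define h where "h = m + (1 - m) * t powr \<alpha>"
    have h: "h > 0" unfolding h_def using m by (intro add_pos_nonneg) auto
    have gb: "\<bar>g s\<bar> \<le> M * (A + B * h)"
      unfolding A_def B_def
      using pw[OF q abs_ge_zero M h c] pt[OF s] rt by (simp add: t_def h_def algebra_simps)
    have eq: "d s powr \<theta> * t powr \<alpha> = d s powr (\<theta> + \<alpha>) / L powr \<alpha>"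
      unfolding t_def using ds L by (simp add: powr_divide powr_add)
    have "norm (d s powr \<theta> * g s) = d s powr \<theta> * \<bar>g s\<bar>" by (simp add: abs_mult)
    also have "\<dots> \<le> d s powr \<theta> * (M * (A + B * h))"
      using gb by (intro mult_left_mono) auto
    also have "\<dots> = M * ((A + B * m) * d s powr \<theta> + B * (1 - m) * (d s powr \<theta> * t powr \<alpha>))"
      unfolding h_def by (simp add: algebra_simps)
    also have "\<dots> = G s" unfolding G_def eq by simp
    finally show ?thesis .
  qed
  have "\<bar>integral S (\<lambda>s. d s powr \<theta> * g s)\<bar> \<le> integral S G"
    using integral_norm_bound_integral[OF gint _ le] GI by auto
  also have "integral S G = V" using GI by (rule integral_unique)
  also have "V = M * L powr (\<theta> + 1) / (\<theta> + 1) * (A + B * c)"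
  proof -
    have "L powr (\<theta> + \<alpha> + 1) = L powr \<alpha> * L powr (\<theta> + 1)"
      by (simp add: powr_add[symmetric] algebra_simps)
    moreover have "L powr \<alpha> > 0" using L by simp
    ultimately have e: "B * (1 - m) / L powr \<alpha> * (L powr (\<theta> + \<alpha> + 1) / (\<theta> + \<alpha> + 1))
        = B * (1 - m) * L powr (\<theta> + 1) / (\<theta> + \<alpha> + 1)" by simp
    have cc: "c = m + (1 - m) * (\<theta> + 1) / (\<theta> + \<alpha> + 1)"
      unfolding c_def using \<alpha> \<theta> by (simp add: field_simps)
    show ?thesis unfolding V_def e cc using \<alpha> \<theta> by (simp add: field_simps)
  qed
  also have "A + B * c = c powr (1 / q)"
  proof -
    have "c powr (1/q - 1) * c = c powr (1/q)"
      using c powr_add[of c "1/q - 1" 1] by simp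
    then show ?thesis unfolding A_def B_def using q by (simp add: algebra_simps)
  qed
  finally show ?thesis unfolding c_def .
qed


lemma rpow0_range:
  assumes "0 \<le> t" "t \<le> 1" "0 \<le> \<alpha>"
  shows "0 \<le> rpow0 t \<alpha> \<and> rpow0 t \<alpha> \<le> 1"
proof (cases "t = 0 \<and> \<alpha> = 0")
  case True then show ?thesis by (simp add: rpow0_def)
next
  case False
  then have "rpow0 t \<alpha> = t powr \<alpha>" by (simp add: rpow0_def)
  moreover have "t powr \<alpha> \<le> 1 powr \<alpha>" using assms by (intro powr_mono2) auto
  ultimately show ?thesis by simp
qed

lemma conv_pt:
  fixes f' :: "real \<Rightarrow> real"
  assumes conv: "alpha_m_convex \<alpha> m K (\<lambda>u. \<bar>f' u\<bar> powr q)"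
    and bound: "\<And>u. u \<in> K \<Longrightarrow> \<bar>f' u\<bar> \<le> M"
    and q: "q > 0" and m: "0 < m" "m \<le> 1" and \<alpha>: "0 \<le> \<alpha>"
    and X: "X \<in> K" and Y: "Y \<in> K" and t: "0 \<le> t" "t \<le> 1"
    and P: "t * X + m * (1 - t) * Y \<in> K"
  shows "\<bar>f' (t * X + m * (1 - t) * Y)\<bar> powr q \<le> M powr q * (m + (1 - m) * rpow0 t \<alpha>)"
proof -
  have r: "0 \<le> rpow0 t \<alpha>" "rpow0 t \<alpha> \<le> 1" using rpow0_range[OF t \<alpha>] by auto
  have bX: "\<bar>f' X\<bar> powr q \<le> M powr q" using bound[OF X] by (intro powr_mono2) (use q in auto)
  have bY: "\<bar>f' Y\<bar> powr q \<le> M powr q" using bound[OF Y] by (intro powr_mono2) (use q in auto)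
  have "\<bar>f' (t * X + m * (1 - t) * Y)\<bar> powr q
        \<le> rpow0 t \<alpha> * \<bar>f' X\<bar> powr q + m * (1 - rpow0 t \<alpha>) * \<bar>f' Y\<bar> powr q"
    using conv X Y t P unfolding alpha_m_convex_def by auto
  also have "\<dots> \<le> rpow0 t \<alpha> * M powr q + m * (1 - rpow0 t \<alpha>) * M powr q"
    using r m bX bY by (intro add_mono mult_left_mono) auto
  also have "\<dots> = M powr q * (m + (1 - m) * rpow0 t \<alpha>)" by (simp add: algebra_simps)
  finally show ?thesis .
qed


lemma alg:
  fixes G \<theta> \<mu> d u v F P Q :: real
  assumes "G > 0" "\<theta> > 0" "\<mu> > 0" "d > 0"
  shows "(u + v) / d * F - \<theta> * G / (\<mu> * d) * (1 / G * (\<mu> * u / \<theta> * F - P / \<theta>) + 1 / G * (\<mu> * v / \<theta> * F + Q / \<theta>))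
    = (P - Q) / (\<mu> * d)"
proof -
  have "1 / G * (\<mu> * u / \<theta> * F - P / \<theta>) + 1 / G * (\<mu> * v / \<theta> * F + Q / \<theta>)
      = (\<mu> * (u + v) * F + (Q - P)) / (\<theta> * G)"
    using assms by (simp add: field_simps)
  then have "\<theta> * G / (\<mu> * d) * (1 / G * (\<mu> * u / \<theta> * F - P / \<theta>) + 1 / G * (\<mu> * v / \<theta> * F + Q / \<theta>))
      = (\<mu> * (u + v) * F + (Q - P)) / (\<mu> * d)"
    using assms by simp
  then show ?thesis using assms by (simp add: field_simps)
qed

lemma alg2:
  fixes M m \<mu> X Y k C d :: real
  assumes "\<mu> > 0" "d > 0" "k > 0"
  shows "(M * (m * \<mu> * X) / k * C + M * (m * \<mu> * Y) / k * C) / (\<mu> * d)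
     = m * M / k * C * (X + Y) / d"
proof -
  have "M * (m * \<mu> * X) / k * C + M * (m * \<mu> * Y) / k * C
      = \<mu> * (m * M / k * C * (X + Y))"
    using assms by (simp add: field_simps)
  then show ?thesis using assms by simp
qed

theorem mainTheorem8:
  fixes I :: "real set" and f f' :: "real \<Rightarrow> real"
    and m \<alpha> a b q M x \<theta> :: real
  assumes q: "q \<ge> 1"
    and I: "is_interval I" "I \<subseteq> {0..}"
    and deriv: "\<And>u. u \<in> interior I \<Longrightarrow> (f has_real_derivative f' u) (at u)"
    and m: "0 < m" "m \<le> 1"
    and \<alpha>: "0 \<le> \<alpha>" "\<alpha> \<le> 1"
    and ab: "a < b" "m * a \<in> interior I" "b \<in> interior I"
    and integ: "set_integrable lborel {m * a..m * b} f'"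
    and conv: "alpha_m_convex \<alpha> m {m * a..b} (\<lambda>u. \<bar>f' u\<bar> powr q)"
    and bound: "\<And>u. u \<in> {m * a..b} \<Longrightarrow> \<bar>f' u\<bar> \<le> M"
    and x: "x \<in> {a..b}"
    and \<theta>: "\<theta> > 0"
  shows "\<bar>((x - a) powr \<theta> + (b - x) powr \<theta>) / (b - a) * f (m * x)
          - Gamma (\<theta> + 1) / (m powr \<theta> * (b - a)) *
            (frac_left \<theta> f (m * a) (m * x) + frac_right \<theta> f (m * x) (m * b))\<bar>
         \<le> m * M / (\<theta> + 1) * ((\<alpha> * m + \<theta> + 1) / (\<alpha> + \<theta> + 1)) powr (1 / q)
            * ((x - a) powr (\<theta> + 1) + (b - x) powr (\<theta> + 1)) / (b - a)"
proof -
  define lo where "lo = m * a"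
  define mid where "mid = m * x"
  define hi where "hi = m * b"
  define K where "K = {m * a..b}"
  define C where "C = ((\<alpha> * m + \<theta> + 1) / (\<alpha> + \<theta> + 1)) powr (1 / q)"
  have C0: "C \<ge> 0" unfolding C_def by simp
  have "m * a \<in> I" using ab interior_subset by blast
  then have "m * a \<ge> 0" using I by auto
  then have a0: "a \<ge> 0" using m by (simp add: zero_le_mult_iff)
  have xa: "a \<le> x" and xb: "x \<le> b" using x by auto
  have b0: "b \<ge> 0" using a0 ab by auto
  have "m * a \<le> a" using m a0 by (simp add: mult_left_le_one_le)
  then have "b \<in> {m * a..b}" using ab by auto
  then have M0: "M \<ge> 0" using bound[of b] by linarith
  have lomid: "lo \<le> mid" unfolding lo_def mid_def using xa m by simp
  have midhi: "mid \<le> hi" unfolding hi_def mid_def using xb m by simp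
  have hib: "hi \<le> b" unfolding hi_def using m b0 by (simp add: mult_left_le_one_le)
  have midx: "mid \<le> x" unfolding mid_def using m a0 xa by (simp add: mult_left_le_one_le)
  have alo: "lo \<le> a" unfolding lo_def using m a0 by (simp add: mult_left_le_one_le)
  have intI: "is_interval (interior I)"
    using I(1) by (simp add: is_interval_convex_1)
  have sub: "{lo..hi} \<subseteq> interior I"
  proof
    fix u assume "u \<in> {lo..hi}"
    then have "m * a \<le> u" "u \<le> b" using hib unfolding lo_def by auto
    then show "u \<in> interior I" using intI ab unfolding is_interval_1 by blast
  qed
  have der: "(f has_real_derivative f' u) (at u)" if "u \<in> {lo..hi}" for u
    using deriv sub that by blast
  have contf: "continuous_on {lo..hi} f"
    by (intro continuous_at_imp_continuous_on ballI DERIV_isCont[OF der])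
  have fabs: "f' absolutely_integrable_on {lo..hi}"
  proof -
    have "f' integrable_on {lo..hi}"
      using set_borel_integral_eq_integral(1)[OF integ] unfolding lo_def hi_def .
    moreover have "(\<lambda>u. norm (f' u)) integrable_on {lo..hi}"
      using set_borel_integral_eq_integral(1)[OF set_integrable_abs[OF integ]] unfolding lo_def hi_def
      by simp
    ultimately show ?thesis unfolding absolutely_integrable_on_def by blast
  qed
  have prodint: "(\<lambda>s. w s * f' s) integrable_on {u..v}"
    if "{u..v} \<subseteq> {lo..hi}" "continuous_on {u..v} w" for w u v
  proof -
    have "(\<lambda>s. w s * f' s) absolutely_integrable_on {u..v}"
    proof (rule absolutely_integrable_bounded_measurable_product_real)
      show "w \<in> borel_measurable (lebesgue_on {u..v})"
        using that by (intro continuous_imp_measurable_on_sets_lebesgue) auto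
      show "{u..v} \<in> sets lebesgue" by simp
      show "bounded (w ` {u..v})"
        using that by (intro compact_imp_bounded compact_continuous_image) auto
      show "f' absolutely_integrable_on {u..v}"
        using absolutely_integrable_on_subinterval[OF fabs that(1)] .
    qed
    then show ?thesis using absolutely_integrable_on_def by blast
  qed
  define P where "P = integral {lo..mid} (\<lambda>s. (s - lo) powr \<theta> * f' s)"
  define Q where "Q = integral {mid..hi} (\<lambda>s. (hi - s) powr \<theta> * f' s)"
  have Pint: "(\<lambda>s. (s - lo) powr \<theta> * f' s) integrable_on {lo..mid}"
    using lomid midhi \<theta> by (intro prodint continuous_intros continuous_on_powr') auto
  have Qint: "(\<lambda>s. (hi - s) powr \<theta> * f' s) integrable_on {mid..hi}"
    using lomid midhi \<theta> by (intro prodint continuous_intros continuous_on_powr') auto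
  have FL: "((\<lambda>s. (s - lo) powr (\<theta> - 1) * f s + (s - lo) powr \<theta> / \<theta> * f' s) has_integral
        ((\<lambda>s. (s - lo) powr \<theta> / \<theta> * f s) mid - (\<lambda>s. (s - lo) powr \<theta> / \<theta> * f s) lo)) {lo..mid}"
  proof (rule fundamental_theorem_of_calculus_interior[OF lomid])
    show "continuous_on {lo..mid} (\<lambda>s. (s - lo) powr \<theta> / \<theta> * f s)"
      using \<theta> lomid midhi
      by (intro continuous_intros continuous_on_powr' continuous_on_subset[OF contf]) auto
    fix s assume s: "s \<in> {lo<..<mid}"
    then have ds: "(f has_real_derivative f' s) (at s)" using der midhi by auto
    show "((\<lambda>s. (s - lo) powr \<theta> / \<theta> * f s) has_vector_derivative
          (s - lo) powr (\<theta> - 1) * f s + (s - lo) powr \<theta> / \<theta> * f' s) (at s)"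
      unfolding has_real_derivative_iff_has_vector_derivative[symmetric]
      using s \<theta> by (auto intro!: derivative_eq_intros ds simp: field_simps)
  qed
  have IL: "integral {lo..mid} (\<lambda>s. (s - lo) powr (\<theta> - 1) * f s) = (mid - lo) powr \<theta> / \<theta> * f mid - P / \<theta>"
  proof -
    have "((\<lambda>s. (s - lo) powr \<theta> / \<theta> * f' s) has_integral P / \<theta>) {lo..mid}"
      using has_integral_mult_right[OF integrable_integral[OF Pint], of "1/\<theta>"] unfolding P_def
      by simp
    from has_integral_diff[OF FL this]
    have "((\<lambda>s. (s - lo) powr (\<theta> - 1) * f s) has_integral (mid - lo) powr \<theta> / \<theta> * f mid - P / \<theta>) {lo..mid}"
      using \<theta> by simp
    then show ?thesis by (rule integral_unique)
  qed
  have FR: "((\<lambda>s. (hi - s) powr (\<theta> - 1) * f s - (hi - s) powr \<theta> / \<theta> * f' s) has_integral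
        ((\<lambda>s. 0 - (hi - s) powr \<theta> / \<theta> * f s) hi - (\<lambda>s. 0 - (hi - s) powr \<theta> / \<theta> * f s) mid)) {mid..hi}"
  proof (rule fundamental_theorem_of_calculus_interior[OF midhi])
    show "continuous_on {mid..hi} (\<lambda>s. 0 - (hi - s) powr \<theta> / \<theta> * f s)"
      using \<theta> lomid midhi
      by (intro continuous_intros continuous_on_powr' continuous_on_subset[OF contf]) auto
    fix s assume s: "s \<in> {mid<..<hi}"
    then have ds: "(f has_real_derivative f' s) (at s)" using der lomid by auto
    show "((\<lambda>s. 0 - (hi - s) powr \<theta> / \<theta> * f s) has_vector_derivative
          (hi - s) powr (\<theta> - 1) * f s - (hi - s) powr \<theta> / \<theta> * f' s) (at s)"
      unfolding has_real_derivative_iff_has_vector_derivative[symmetric]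
      using s \<theta> by (auto intro!: derivative_eq_intros ds simp: field_simps)
  qed
  have IR: "integral {mid..hi} (\<lambda>s. (hi - s) powr (\<theta> - 1) * f s) = (hi - mid) powr \<theta> / \<theta> * f mid + Q / \<theta>"
  proof -
    have "((\<lambda>s. (hi - s) powr \<theta> / \<theta> * f' s) has_integral Q / \<theta>) {mid..hi}"
      using has_integral_mult_right[OF integrable_integral[OF Qint], of "1/\<theta>"] unfolding Q_def
      by simp
    from has_integral_add[OF FR this]
    have "((\<lambda>s. (hi - s) powr (\<theta> - 1) * f s) has_integral (hi - mid) powr \<theta> / \<theta> * f mid + Q / \<theta>) {mid..hi}"
      using \<theta> by simp
    then show ?thesis by (rule integral_unique)
  qed
  have Pb: "\<bar>P\<bar> \<le> M * (mid - lo) powr (\<theta> + 1) / (\<theta> + 1) * C"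
  proof (cases "mid = lo")
    case True then show ?thesis unfolding P_def using \<theta> by simp
  next
    case False
    then have L: "mid - lo > 0" using lomid by simp
    show ?thesis unfolding P_def C_def
    proof (rule side_bound[OF q m \<alpha> \<theta> L M0])
      show "((\<lambda>s. (s - lo) powr \<theta>) has_integral (mid - lo) powr (\<theta> + 1) / (\<theta> + 1)) {lo..mid}"
        using powr_int_left[OF lomid \<theta>] .
      show "((\<lambda>s. (s - lo) powr (\<theta> + \<alpha>)) has_integral (mid - lo) powr (\<theta> + \<alpha> + 1) / (\<theta> + \<alpha> + 1)) {lo..mid}"
        using powr_int_left[OF lomid, of "\<theta> + \<alpha>"] \<theta> \<alpha> by simp
      show "0 \<le> s - lo \<and> s - lo \<le> mid - lo" if "s \<in> {lo..mid}" for s using that by auto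
      show "(\<lambda>s. (s - lo) powr \<theta> * f' s) integrable_on {lo..mid}" using Pint .
      fix s assume s: "s \<in> {lo..mid}"
      define t where "t = (s - lo) / (mid - lo)"
      have t: "0 \<le> t" "t \<le> 1" unfolding t_def using s L by auto
      have se: "t * mid + m * (1 - t) * a = s"
      proof -
        have "t * (mid - lo) = s - lo" unfolding t_def using L by simp
        moreover have "m * (1 - t) * a = lo - t * lo" unfolding lo_def by (simp add: algebra_simps)
        ultimately show ?thesis by (simp add: algebra_simps)
      qed
      have "\<bar>f' (t * mid + m * (1 - t) * a)\<bar> powr q \<le> M powr q * (m + (1 - m) * rpow0 t \<alpha>)"
      proof (rule conv_pt[OF conv bound])
        show "mid \<in> {m * a..b}" using lomid midx xb unfolding lo_def by auto
        show "a \<in> {m * a..b}" using alo xa xb unfolding lo_def by auto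
        show "t * mid + m * (1 - t) * a \<in> {m * a..b}"
          unfolding se using s midx xb unfolding lo_def by auto
      qed (use q m \<alpha> t in auto)
      then have "\<bar>f' s\<bar> powr q \<le> M powr q * (m + (1 - m) * rpow0 t \<alpha>)"
        by (simp only: se)
      then show "\<bar>f' s\<bar> powr q \<le> M powr q * (m + (1 - m) * rpow0 ((s - lo) / (mid - lo)) \<alpha>)"
        by (simp only: t_def)
    qed
  qed
  have Qb: "\<bar>Q\<bar> \<le> M * (hi - mid) powr (\<theta> + 1) / (\<theta> + 1) * C"
  proof (cases "hi = mid")
    case True then show ?thesis unfolding Q_def using \<theta> by simp
  next
    case False
    then have L: "hi - mid > 0" using midhi by simp
    show ?thesis unfolding Q_def C_def
    proof (rule side_bound[OF q m \<alpha> \<theta> L M0])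
      show "((\<lambda>s. (hi - s) powr \<theta>) has_integral (hi - mid) powr (\<theta> + 1) / (\<theta> + 1)) {mid..hi}"
        using powr_int_right[OF midhi \<theta>] .
      show "((\<lambda>s. (hi - s) powr (\<theta> + \<alpha>)) has_integral (hi - mid) powr (\<theta> + \<alpha> + 1) / (\<theta> + \<alpha> + 1)) {mid..hi}"
        using powr_int_right[OF midhi, of "\<theta> + \<alpha>"] \<theta> \<alpha> by simp
      show "0 \<le> hi - s \<and> hi - s \<le> hi - mid" if "s \<in> {mid..hi}" for s using that by auto
      show "(\<lambda>s. (hi - s) powr \<theta> * f' s) integrable_on {mid..hi}" using Qint .
      fix s assume s: "s \<in> {mid..hi}"
      define t where "t = (hi - s) / (hi - mid)"
      have t: "0 \<le> t" "t \<le> 1" unfolding t_def using s L by auto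
      have se: "t * mid + m * (1 - t) * b = s"
      proof -
        have "t * (hi - mid) = hi - s" unfolding t_def using L by simp
        moreover have "m * (1 - t) * b = hi - t * hi" unfolding hi_def by (simp add: algebra_simps)
        ultimately show ?thesis by (simp add: algebra_simps)
      qed
      have "\<bar>f' (t * mid + m * (1 - t) * b)\<bar> powr q \<le> M powr q * (m + (1 - m) * rpow0 t \<alpha>)"
      proof (rule conv_pt[OF conv bound])
        show "mid \<in> {m * a..b}" using lomid midx xb unfolding lo_def by auto
        show "b \<in> {m * a..b}" using alo xa xb unfolding lo_def by auto
        show "t * mid + m * (1 - t) * b \<in> {m * a..b}"
          unfolding se using s lomid hib unfolding lo_def by auto
      qed (use q m \<alpha> t in auto)
      then have "\<bar>f' s\<bar> powr q \<le> M powr q * (m + (1 - m) * rpow0 t \<alpha>)"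
        by (simp only: se)
      then show "\<bar>f' s\<bar> powr q \<le> M powr q * (m + (1 - m) * rpow0 ((hi - s) / (hi - mid)) \<alpha>)"
        by (simp only: t_def)
    qed
  qed
  define \<mu> where "\<mu> = m powr \<theta>"
  have \<mu>: "\<mu> > 0" unfolding \<mu>_def using m by simp
  have G: "Gamma \<theta> > 0" using \<theta> by (simp add: Gamma_real_pos)
  have "\<theta> \<notin> \<int>\<^sub>\<le>\<^sub>0" using \<theta> nonpos_Ints_nonpos by fastforce
  then have G1: "Gamma (\<theta> + 1) = \<theta> * Gamma \<theta>" by (rule Gamma_plus1)
  have d1: "mid - lo = m * (x - a)" unfolding mid_def lo_def by (simp add: algebra_simps)
  have d2: "hi - mid = m * (b - x)" unfolding mid_def hi_def by (simp add: algebra_simps)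
  have mp: "m powr (\<theta> + 1) = m * \<mu>" unfolding \<mu>_def using m by (simp add: powr_add)
  have e1: "(mid - lo) powr \<theta> = \<mu> * (x - a) powr \<theta>"
    unfolding d1 \<mu>_def using m xa by (simp add: powr_mult)
  have e2: "(hi - mid) powr \<theta> = \<mu> * (b - x) powr \<theta>"
    unfolding d2 \<mu>_def using m xb by (simp add: powr_mult)
  have e3: "(mid - lo) powr (\<theta> + 1) = m * \<mu> * (x - a) powr (\<theta> + 1)"
    unfolding d1 mp[symmetric] using m xa by (simp add: powr_mult)
  have e4: "(hi - mid) powr (\<theta> + 1) = m * \<mu> * (b - x) powr (\<theta> + 1)"
    unfolding d2 mp[symmetric] using m xb by (simp add: powr_mult)
  have FLv: "frac_left \<theta> f lo mid = 1 / Gamma \<theta> * (\<mu> * (x - a) powr \<theta> / \<theta> * f mid - P / \<theta>)"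
    unfolding frac_left_def IL e1 by simp
  have FRv: "frac_right \<theta> f mid hi = 1 / Gamma \<theta> * (\<mu> * (b - x) powr \<theta> / \<theta> * f mid + Q / \<theta>)"
    unfolding frac_right_def IR e2 by simp
  have E: "((x - a) powr \<theta> + (b - x) powr \<theta>) / (b - a) * f (m * x)
          - Gamma (\<theta> + 1) / (m powr \<theta> * (b - a)) *
            (frac_left \<theta> f (m * a) (m * x) + frac_right \<theta> f (m * x) (m * b))
        = (P - Q) / (\<mu> * (b - a))"
    unfolding lo_def[symmetric] mid_def[symmetric] hi_def[symmetric] FLv FRv \<mu>_def[symmetric] G1
    by (rule alg) (use G \<theta> \<mu> ab in auto)
  have "\<bar>(P - Q) / (\<mu> * (b - a))\<bar> \<le> (\<bar>P\<bar> + \<bar>Q\<bar>) / (\<mu> * (b - a))"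
    using \<mu> ab by (simp add: abs_div divide_right_mono abs_triangle_ineq4 abs_mult)
  also have "\<dots> \<le> (M * (mid - lo) powr (\<theta> + 1) / (\<theta> + 1) * C + M * (hi - mid) powr (\<theta> + 1) / (\<theta> + 1) * C)
        / (\<mu> * (b - a))"
    using \<mu> ab Pb Qb by (intro divide_right_mono add_mono) auto
  also have "\<dots> = m * M / (\<theta> + 1) * C * ((x - a) powr (\<theta> + 1) + (b - x) powr (\<theta> + 1)) / (b - a)"
    unfolding e3 e4 by (rule alg2) (use \<mu> ab \<theta> in auto)
  finally show ?thesis unfolding E C_def .
qed

end
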